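(* If $A\subseteq\mathbb{Z}^d$ is finite, then $\|\min_{\preceq}(A^* )\|\leq d\cdot\left(2+(1+2\cdot\|A\|)^d\cdot\|A\|\right)^d$.
   Context: $A^*$ is the submonoid of $(\mathbb{Z}^d,+)$ generated by $A$ (finite sums of elements of $A$). For $x\in\mathbb{Z}^d$, $\|x\|=\max_i|x(i)|$; for a finite set $Y$, $\|Y\|=\max_{y\in Y}\|y\|$ (with $\max\emptyset=0$). The partial order $\preceq$ on $\mathbb{Z}^d$: $x\preceq y$ iff $x$ and $y$ have the same componentwise sign vector and $|x(i)|\leq|y(i)|$ for all $i$; $\min_{\preceq}(Y)$ is the (finite) set of $\preceq$-minimal elements of $Y$. *)

theory Defs
  imports "HOL-Analysis.Analysis"
begin

text \<open>Vectors of Z^d are represented as int ^ 'd, with d = CARD('d).\<close>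

inductive_set monoid_closure :: "(int ^ 'd) set \<Rightarrow> (int ^ 'd) set" for A where
  zero: "0 \<in> monoid_closure A"
| add: "a \<in> A \<Longrightarrow> x \<in> monoid_closure A \<Longrightarrow> a + x \<in> monoid_closure A"

definition maxnorm :: "int ^ 'd \<Rightarrow> int" where
  "maxnorm x = Max {\<bar>x $ i\<bar> | i. True}"

definition set_maxnorm :: "(int ^ 'd) set \<Rightarrow> int" where
  "set_maxnorm Y = (if Y = {} then 0 else Max (maxnorm ` Y))"

definition sign_le :: "int ^ 'd \<Rightarrow> int ^ 'd \<Rightarrow> bool" where
  "sign_le x y \<longleftrightarrow> (\<forall>i. sgn (x $ i) = sgn (y $ i) \<and> \<bar>x $ i\<bar> \<le> \<bar>y $ i\<bar>)"

definition min_sign :: "(int ^ 'd) set \<Rightarrow> (int ^ 'd) set" where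
  "min_sign Y = {y \<in> Y. \<forall>z \<in> Y. sign_le z y \<longrightarrow> z = y}"

end

theory Submission
  imports Defs
begin


lemma dep_exists:
  fixes W :: "'i \<Rightarrow> 'v::euclidean_space"
  assumes "finite F" "card F > DIM('v)"
  shows "\<exists>\<delta>. (\<exists>j\<in>F. \<delta> j \<noteq> 0) \<and> (\<Sum>j\<in>F. \<delta> j *\<^sub>R W j) = 0"
proof (cases "inj_on W F")
  case False
  then obtain j j' where jj: "j \<in> F" "j' \<in> F" "j \<noteq> j'" "W j = W j'"
    unfolding inj_on_def by blast
  define \<delta> where "\<delta> = (\<lambda>x. if x = j then 1 else if x = j' then -1 else (0::real))"
  have "(\<Sum>x\<in>F. \<delta> x *\<^sub>R W x) = (\<Sum>x\<in>{j,j'}. \<delta> x *\<^sub>R W x)"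
    by (rule sum.mono_neutral_right) (use assms jj in \<open>auto simp: \<delta>_def\<close>)
  also have "\<dots> = 0" using jj by (simp add: \<delta>_def)
  finally show ?thesis using jj by (auto simp: \<delta>_def intro!: exI[of _ \<delta>])
next
  case True
  have "card (W ` F) > DIM('v)" using True assms by (simp add: card_image)
  hence "dependent (W ` F)" using dependent_biggerset by blast
  then obtain T U where T: "finite T" "T \<subseteq> W ` F" "(\<Sum>v\<in>T. U v *\<^sub>R v) = 0" "\<exists>v\<in>T. U v \<noteq> 0"
    unfolding dependent_explicit by blast
  define \<delta> where "\<delta> = (\<lambda>x. if W x \<in> T then U (W x) else 0)"
  have "(\<Sum>x\<in>F. \<delta> x *\<^sub>R W x) = (\<Sum>x\<in>F \<inter> W -` T. U (W x) *\<^sub>R W x)"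
    by (rule sum.mono_neutral_cong_right) (use assms in \<open>auto simp: \<delta>_def\<close>)
  also have "\<dots> = (\<Sum>v\<in>W ` (F \<inter> W -` T). U v *\<^sub>R v)"
    by (rule sum.reindex[symmetric, unfolded comp_def]) (use True in \<open>auto intro: inj_on_subset\<close>)
  also have "W ` (F \<inter> W -` T) = T" using T by auto
  finally have "(\<Sum>x\<in>F. \<delta> x *\<^sub>R W x) = 0" using T by simp
  moreover obtain v where "v \<in> T" "U v \<noteq> 0" using T by blast
  then obtain j where "j \<in> F" "W j = v" using T by blast
  ultimately show ?thesis using \<open>v \<in> T\<close> \<open>U v \<noteq> 0\<close> by (auto simp: \<delta>_def intro!: exI[of _ \<delta>] bexI[of _ j])
qed



lemma vertex:
  fixes W :: "'i \<Rightarrow> 'v::euclidean_space"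
  assumes "finite S" "\<forall>j\<in>S. 0 \<le> \<mu> j \<and> \<mu> j \<le> 1" "(\<Sum>j\<in>S. \<mu> j *\<^sub>R W j) = b"
  shows "\<exists>\<mu>'. (\<forall>j\<in>S. 0 \<le> \<mu>' j \<and> \<mu>' j \<le> 1) \<and> (\<Sum>j\<in>S. \<mu>' j *\<^sub>R W j) = b
           \<and> card {j\<in>S. 0 < \<mu>' j \<and> \<mu>' j < 1} \<le> DIM('v)"
proof -
  have "\<forall>\<mu>. card {j\<in>S. 0 < \<mu> j \<and> \<mu> j < 1} = m \<longrightarrow> (\<forall>j\<in>S. 0 \<le> \<mu> j \<and> \<mu> j \<le> 1) \<longrightarrow> (\<Sum>j\<in>S. \<mu> j *\<^sub>R W j) = b \<longrightarrow>
     (\<exists>\<mu>'. (\<forall>j\<in>S. 0 \<le> \<mu>' j \<and> \<mu>' j \<le> 1) \<and> (\<Sum>j\<in>S. \<mu>' j *\<^sub>R W j) = b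
           \<and> card {j\<in>S. 0 < \<mu>' j \<and> \<mu>' j < 1} \<le> DIM('v))" for m
  proof (induction m rule: less_induct)
    case (less m)
    show ?case
    proof (intro allI impI)
      fix \<mu> assume cm: "card {j\<in>S. 0 < \<mu> j \<and> \<mu> j < 1} = m" and b01: "\<forall>j\<in>S. 0 \<le> \<mu> j \<and> \<mu> j \<le> 1"
        and sb: "(\<Sum>j\<in>S. \<mu> j *\<^sub>R W j) = b"
      define F where "F = {j\<in>S. 0 < \<mu> j \<and> \<mu> j < 1}"
      have finF: "finite F" using assms(1) by (simp add: F_def)
      show "\<exists>\<mu>'. (\<forall>j\<in>S. 0 \<le> \<mu>' j \<and> \<mu>' j \<le> 1) \<and> (\<Sum>j\<in>S. \<mu>' j *\<^sub>R W j) = b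
           \<and> card {j\<in>S. 0 < \<mu>' j \<and> \<mu>' j < 1} \<le> DIM('v)"
      proof (cases "m \<le> DIM('v)")
        case True then show ?thesis using cm b01 sb by blast
      next
        case False
        then have "card F > DIM('v)" using cm F_def by simp
        then obtain \<delta> where d1: "\<exists>j\<in>F. \<delta> j \<noteq> 0" and d2: "(\<Sum>j\<in>F. \<delta> j *\<^sub>R W j) = 0"
          using dep_exists[OF finF] by blast
        define G where "G = {j\<in>F. \<delta> j \<noteq> 0}"
        define r where "r = (\<lambda>j. if \<delta> j > 0 then (1 - \<mu> j) / \<delta> j else - \<mu> j / \<delta> j)"
        have finG: "finite G" "G \<noteq> {}" using finF d1 by (auto simp: G_def)
        define t where "t = Min (r ` G)"
        have "t \<in> r ` G" unfolding t_def using finG by (intro Min_in) auto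
        then obtain j0 where j0: "j0 \<in> G" "r j0 = t" by auto
        have tle: "t \<le> r j" if "j \<in> G" for j
          using finG that unfolding t_def by auto
        have rpos: "r j > 0" if "j \<in> G" for j
          using that by (auto simp: G_def F_def r_def field_simps)
        have tpos: "t > 0" using rpos j0 by auto
        define \<mu>' where "\<mu>' = (\<lambda>j. if j \<in> F then \<mu> j + t * \<delta> j else \<mu> j)"
        have new01: "0 \<le> \<mu>' j \<and> \<mu>' j \<le> 1" if "j \<in> S" for j
        proof (cases "j \<in> G")
          case True
          have tj: "t \<le> r j" using tle True .
          have jF: "j \<in> F" "0 < \<mu> j" "\<mu> j < 1" using True by (auto simp: G_def F_def)
          show ?thesis
          proof (cases "\<delta> j > 0")
            case True
            have "t * \<delta> j \<le> r j * \<delta> j" using tj True by (simp add: mult_right_mono)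
            also have "\<dots> = 1 - \<mu> j" using True by (simp add: r_def)
            finally show ?thesis using jF True tpos by (simp add: \<mu>'_def)
          next
            case False
            hence neg: "\<delta> j < 0" using \<open>j\<in>G\<close> by (auto simp: G_def)
            have "r j * \<delta> j \<le> t * \<delta> j" using tj neg by (simp add: mult_right_mono_neg)
            moreover have "r j * \<delta> j = - \<mu> j" using neg by (simp add: r_def)
            moreover have "t * \<delta> j \<le> 0" using tpos neg by (simp add: mult_pos_neg less_imp_le)
            ultimately show ?thesis using jF by (simp add: \<mu>'_def)
          qed
        next
          case False
          then show ?thesis using b01 that by (auto simp: \<mu>'_def G_def)
        qed
        have "(\<Sum>j\<in>S. \<mu>' j *\<^sub>R W j) = (\<Sum>j\<in>S. \<mu> j *\<^sub>R W j) + (\<Sum>j\<in>S. (if j \<in> F then t * \<delta> j else 0) *\<^sub>R W j)"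
          by (simp add: sum.distrib[symmetric], rule sum.cong, auto simp: \<mu>'_def scaleR_add_left)
        also have "(\<Sum>j\<in>S. (if j \<in> F then t * \<delta> j else 0) *\<^sub>R W j) = (\<Sum>j\<in>F. (t * \<delta> j) *\<^sub>R W j)"
          by (rule sum.mono_neutral_cong_right) (use assms(1) in \<open>auto simp: F_def\<close>)
        also have "\<dots> = t *\<^sub>R (\<Sum>j\<in>F. \<delta> j *\<^sub>R W j)" by (simp add: scaleR_sum_right)
        finally have sb': "(\<Sum>j\<in>S. \<mu>' j *\<^sub>R W j) = b" using d2 sb by simp
        have sub: "{j\<in>S. 0 < \<mu>' j \<and> \<mu>' j < 1} \<subseteq> F - {j0}"
        proof
          fix j assume j: "j \<in> {j\<in>S. 0 < \<mu>' j \<and> \<mu>' j < 1}"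
          have "j \<in> F" using j by (auto simp: \<mu>'_def F_def split: if_splits)
          moreover have "j \<noteq> j0"
          proof
            assume "j = j0"
            have jG: "j0 \<in> F" "\<delta> j0 \<noteq> 0" using j0 by (auto simp: G_def)
            have "\<mu>' j0 = 1 \<or> \<mu>' j0 = 0"
              using jG j0(2) by (auto simp: \<mu>'_def r_def split: if_splits)
            then show False using j \<open>j = j0\<close> by auto
          qed
          ultimately show "j \<in> F - {j0}" by simp
        qed
        have "card {j\<in>S. 0 < \<mu>' j \<and> \<mu>' j < 1} \<le> card (F - {j0})"
          by (rule card_mono) (use finF sub in auto)
        also have "\<dots> < card F" using j0 finF by (intro card_Diff1_less) (auto simp: G_def)
        finally have "card {j\<in>S. 0 < \<mu>' j \<and> \<mu>' j < 1} < m" using cm F_def by simp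
        then show ?thesis using less.IH new01 sb' by blast
      qed
    qed
  qed
  then show ?thesis using assms by blast
qed



definition QQ :: "('i \<Rightarrow> real^'d) \<Rightarrow> 'i set \<Rightarrow> bool" where
  "QQ u S \<longleftrightarrow> (\<exists>lam. (\<forall>j\<in>S. 0 \<le> lam j \<and> lam j \<le> 1) \<and>
     (\<Sum>j\<in>S. lam j *\<^sub>R (u j, 1::real)) = (0, real (card S) - real CARD('d)))"

lemma QQ_step:
  fixes u :: "'i \<Rightarrow> real^'d"
  assumes "finite S" "QQ u S" "card S > CARD('d)"
  shows "\<exists>j\<in>S. QQ u (S - {j})"
proof -
  define k where "k = card S"
  define d where "d = CARD('d)"
  obtain lam where l01: "\<forall>j\<in>S. 0 \<le> lam j \<and> lam j \<le> 1"
    and ls: "(\<Sum>j\<in>S. lam j *\<^sub>R (u j, 1::real)) = (0, real k - real d)"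
    using assms(2) unfolding QQ_def k_def d_def by blast
  define c where "c = (real k - real d - 1) / (real k - real d)"
  have kd: "real k - real d \<ge> 1" using assms(3) unfolding k_def d_def by linarith
  have c01: "0 \<le> c" "c \<le> 1" using kd by (auto simp: c_def field_simps)
  have "(\<Sum>j\<in>S. (c * lam j) *\<^sub>R (u j, 1::real)) = c *\<^sub>R (\<Sum>j\<in>S. lam j *\<^sub>R (u j, 1::real))"
    by (simp add: scaleR_sum_right)
  also have "\<dots> = (0, real k - real d - 1)" using ls kd by (simp add: c_def)
  finally have s0: "(\<Sum>j\<in>S. (c * lam j) *\<^sub>R (u j, 1::real)) = (0, real k - real d - 1)" .
  have b0: "\<forall>j\<in>S. 0 \<le> c * lam j \<and> c * lam j \<le> 1"
    using l01 c01 by (auto simp: mult_le_one)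
  obtain \<mu> where m01: "\<forall>j\<in>S. 0 \<le> \<mu> j \<and> \<mu> j \<le> 1"
    and ms: "(\<Sum>j\<in>S. \<mu> j *\<^sub>R (u j, 1::real)) = (0, real k - real d - 1)"
    and mc: "card {j\<in>S. 0 < \<mu> j \<and> \<mu> j < 1} \<le> DIM((real^'d) \<times> real)"
    using vertex[OF assms(1) b0 s0] by blast
  have mc': "card {j\<in>S. 0 < \<mu> j \<and> \<mu> j < 1} \<le> d + 1" using mc by (simp add: d_def)
  have msum: "(\<Sum>j\<in>S. \<mu> j) = real k - real d - 1"
    using arg_cong[OF ms, of snd] by (simp add: snd_sum)
  have "\<exists>j\<in>S. \<mu> j = 0"
  proof (rule ccontr)
    assume "\<not> ?thesis"
    hence pos: "\<forall>j\<in>S. 0 < \<mu> j" using m01 by force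
    define F where "F = {j\<in>S. \<mu> j < 1}"
    have FF: "F = {j\<in>S. 0 < \<mu> j \<and> \<mu> j < 1}" using pos by (auto simp: F_def)
    have finF: "finite F" using assms(1) by (simp add: F_def)
    have one: "\<forall>j\<in>S - F. \<mu> j = 1" using m01 by (auto simp: F_def)
    have "(\<Sum>j\<in>S. \<mu> j) = (\<Sum>j\<in>S - F. \<mu> j) + (\<Sum>j\<in>F. \<mu> j)"
      using assms(1) by (metis (no_types, lifting) F_def mem_Collect_eq subsetI sum.subset_diff)
    also have "(\<Sum>j\<in>S - F. \<mu> j) = real (card (S - F))" using one by simp
    also have "card (S - F) = k - card F" using assms(1) by (simp add: k_def F_def card_Diff_subset)
    finally have eq: "(\<Sum>j\<in>S. \<mu> j) = real (k - card F) + (\<Sum>j\<in>F. \<mu> j)" .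
    have cF: "card F \<le> d + 1" using mc' FF by simp
    have cFk: "card F \<le> k" using assms(1) by (simp add: k_def F_def card_mono)
    show False
    proof (cases "F = {}")
      case True
      then show ?thesis using eq msum by simp
    next
      case False
      have "(\<Sum>j\<in>F. \<mu> j) > 0" using False finF pos by (intro sum_pos) (auto simp: F_def)
      then show ?thesis using eq msum cF cFk by (simp add: of_nat_diff)
    qed
  qed
  then obtain j where j: "j \<in> S" "\<mu> j = 0" by blast
  have "(\<Sum>i\<in>S - {j}. \<mu> i *\<^sub>R (u i, 1::real)) = (\<Sum>i\<in>S. \<mu> i *\<^sub>R (u i, 1::real))"
    using j assms(1) by (simp add: sum_diff1 zero_prod_def)
  moreover have "real (card (S - {j})) - real CARD('d) = real k - real d - 1"
    using j assms(1) assms(3) by (simp add: k_def d_def of_nat_diff)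
  ultimately have "QQ u (S - {j})" unfolding QQ_def using ms m01 by (intro exI[of _ \<mu>]) auto
  then show ?thesis using j by blast
qed



definition bnd :: "('i \<Rightarrow> real^'d) \<Rightarrow> real \<Rightarrow> 'i set \<Rightarrow> bool" where
  "bnd u K S \<longleftrightarrow> (\<forall>i. \<bar>(\<Sum>j\<in>S. u j) $ i\<bar> \<le> real CARD('d) * K)"

lemma bnd_small:
  fixes u :: "'i \<Rightarrow> real^'d"
  assumes "finite S" "\<forall>j\<in>S. \<forall>i. \<bar>u j $ i\<bar> \<le> K" "K \<ge> 0" "card S \<le> CARD('d)"
  shows "bnd u K S"
  unfolding bnd_def
proof
  fix i
  have "\<bar>(\<Sum>j\<in>S. u j) $ i\<bar> \<le> (\<Sum>j\<in>S. \<bar>u j $ i\<bar>)" by (simp add: sum_abs)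
  also have "\<dots> \<le> (\<Sum>j\<in>S. K)" using assms(2) by (intro sum_mono) auto
  also have "\<dots> = real (card S) * K" by simp
  also have "\<dots> \<le> real CARD('d) * K" using assms(3,4) by (intro mult_right_mono) auto
  finally show "\<bar>(\<Sum>j\<in>S. u j) $ i\<bar> \<le> real CARD('d) * K" .
qed

lemma bnd_QQ:
  fixes u :: "'i \<Rightarrow> real^'d"
  assumes "finite S" "\<forall>j\<in>S. \<forall>i. \<bar>u j $ i\<bar> \<le> K" "QQ u S"
  shows "bnd u K S"
  unfolding bnd_def
proof
  fix i
  obtain lam where l01: "\<forall>j\<in>S. 0 \<le> lam j \<and> lam j \<le> 1"
    and ls: "(\<Sum>j\<in>S. lam j *\<^sub>R (u j, 1::real)) = (0, real (card S) - real CARD('d))"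
    using assms(3) unfolding QQ_def by blast
  have f: "(\<Sum>j\<in>S. lam j *\<^sub>R u j) = 0" using arg_cong[OF ls, of fst] by (simp add: fst_sum)
  have s: "(\<Sum>j\<in>S. lam j) = real (card S) - real CARD('d)" using arg_cong[OF ls, of snd] by (simp add: snd_sum)
  have fi: "(\<Sum>j\<in>S. lam j * u j $ i) = 0" using arg_cong[OF f, of "\<lambda>v. v $ i"] by simp
  have "(\<Sum>j\<in>S. u j) $ i = (\<Sum>j\<in>S. u j $ i) - (\<Sum>j\<in>S. lam j * u j $ i)" using fi by simp
  also have "\<dots> = (\<Sum>j\<in>S. (1 - lam j) * u j $ i)" by (simp add: sum_subtractf left_diff_distrib)
  finally have eq: "(\<Sum>j\<in>S. u j) $ i = (\<Sum>j\<in>S. (1 - lam j) * u j $ i)" .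
  have "\<bar>(\<Sum>j\<in>S. (1 - lam j) * u j $ i)\<bar> \<le> (\<Sum>j\<in>S. \<bar>(1 - lam j) * u j $ i\<bar>)" by (rule sum_abs)
  also have "\<dots> \<le> (\<Sum>j\<in>S. (1 - lam j) * K)"
    using l01 assms(2) by (intro sum_mono) (auto simp: abs_mult intro: mult_left_mono)
  also have "\<dots> = (\<Sum>j\<in>S. (1 - lam j)) * K" by (rule sum_distrib_right[symmetric])
  also have "(\<Sum>j\<in>S. (1 - lam j)) = real (card S) - (\<Sum>j\<in>S. lam j)" by (simp add: sum_subtractf)
  also have "(real (card S) - (\<Sum>j\<in>S. lam j)) * K = real CARD('d) * K" using s by simp
  finally show "\<bar>(\<Sum>j\<in>S. u j) $ i\<bar> \<le> real CARD('d) * K" using eq by simp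
qed

lemma chain_aux:
  fixes u :: "'i \<Rightarrow> real^'d"
  assumes "\<forall>j\<in>T. \<forall>i. \<bar>u j $ i\<bar> \<le> K" "K \<ge> 0" "finite T"
  shows "\<forall>S. S \<subseteq> T \<longrightarrow> card S = n \<longrightarrow> (card S \<le> CARD('d) \<or> QQ u S) \<longrightarrow>
    (\<exists>f. (\<forall>k\<le>n. f k \<subseteq> S \<and> card (f k) = k \<and> bnd u K (f k)) \<and> (\<forall>k<n. f k \<subseteq> f (Suc k)))"
proof (induction n)
  case 0
  show ?case
  proof (intro allI impI)
    fix S :: "'i set" assume "S \<subseteq> T" "card S = 0"
    hence "S = {}" using assms(3) finite_subset by fastforce
    then show "\<exists>f. (\<forall>k\<le>0. f k \<subseteq> S \<and> card (f k) = k \<and> bnd u K (f k)) \<and> (\<forall>k<0. f k \<subseteq> f (Suc k))"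
      by (intro exI[of _ "\<lambda>_. {}"]) (simp add: bnd_def assms(2))
  qed
next
  case (Suc n)
  show ?case
  proof (intro allI impI)
    fix S :: "'i set" assume ST: "S \<subseteq> T" and cS: "card S = Suc n" and h: "card S \<le> CARD('d) \<or> QQ u S"
    have finS: "finite S" using ST assms(3) finite_subset by blast
    have uS: "\<forall>j\<in>S. \<forall>i. \<bar>u j $ i\<bar> \<le> K" using ST assms(1) by blast
    have bS: "bnd u K S" using h bnd_small[OF finS uS assms(2)] bnd_QQ[OF finS uS] by blast
    obtain j where j: "j \<in> S" "card (S - {j}) \<le> CARD('d) \<or> QQ u (S - {j})"
    proof (cases "card S \<le> CARD('d)")
      case True
      have "S \<noteq> {}" using cS by auto
      then obtain j where "j \<in> S" by blast
      moreover have "card (S - {j}) \<le> CARD('d)" using True card_Diff1_le[of S j] by linarith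
      ultimately show ?thesis using that by blast
    next
      case False
      then have "QQ u S" using h by blast
      moreover have "card S > CARD('d)" using False by simp
      ultimately obtain j where "j \<in> S" "QQ u (S - {j})" using QQ_step[OF finS] by blast
      then show ?thesis using that by blast
    qed
    have cS': "card (S - {j}) = n" using cS j finS by simp
    obtain f where f1: "\<forall>k\<le>n. f k \<subseteq> S - {j} \<and> card (f k) = k \<and> bnd u K (f k)"
      and f2: "\<forall>k<n. f k \<subseteq> f (Suc k)"
    proof -
      have "S - {j} \<subseteq> T" using ST by blast
      from Suc.IH[rule_format, OF this cS' j(2)] show ?thesis using that by blast
    qed
    define g where "g = f(Suc n := S)"
    have "g k \<subseteq> S \<and> card (g k) = k \<and> bnd u K (g k)" if "k \<le> Suc n" for k
    proof (cases "k = Suc n")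
      case True then show ?thesis using bS cS by (simp add: g_def)
    next
      case False then have "k \<le> n" using that by simp
      then show ?thesis using f1 False by (auto simp: g_def)
    qed
    moreover have "g k \<subseteq> g (Suc k)" if "k < Suc n" for k
    proof (cases "k = n")
      case True then show ?thesis using f1 by (auto simp: g_def)
    next
      case False then have "k < n" using that by simp
      then show ?thesis using f2 by (auto simp: g_def)
    qed
    ultimately show "\<exists>f. (\<forall>k\<le>Suc n. f k \<subseteq> S \<and> card (f k) = k \<and> bnd u K (f k)) \<and> (\<forall>k<Suc n. f k \<subseteq> f (Suc k))"
      by blast
  qed
qed

lemma steinitz_chain:
  fixes u :: "'i \<Rightarrow> real^'d"
  assumes "\<forall>j\<in>T. \<forall>i. \<bar>u j $ i\<bar> \<le> K" "K \<ge> 0" "finite T" "(\<Sum>j\<in>T. u j) = 0"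
  shows "\<exists>f. (\<forall>k\<le>card T. f k \<subseteq> T \<and> card (f k) = k \<and> bnd u K (f k)) \<and> (\<forall>k<card T. f k \<subseteq> f (Suc k))"
proof -
  have "card T \<le> CARD('d) \<or> QQ u T"
  proof (cases "card T \<le> CARD('d)")
    case False
    define c where "c = (real (card T) - real CARD('d)) / real (card T)"
    have pos: "real (card T) > 0" using False by simp
    have c01: "0 \<le> c" "c \<le> 1" using False pos by (auto simp: c_def field_simps)
    have "(\<Sum>j\<in>T. c *\<^sub>R (u j, 1::real)) = c *\<^sub>R (\<Sum>j\<in>T. (u j, 1::real))" by (simp add: scaleR_sum_right)
    also have "(\<Sum>j\<in>T. (u j, 1::real)) = (0, real (card T))"
      using assms(4) by (simp add: prod_eq_iff fst_sum snd_sum)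
    also have "c *\<^sub>R (0::real^'d, real (card T)) = (0, real (card T) - real CARD('d))"
      using pos by (simp add: c_def)
    finally show ?thesis unfolding QQ_def using c01 by (intro disjI2 exI[of _ "\<lambda>_. c"]) auto
  qed simp
  then show ?thesis using chain_aux[OF assms(1-3)] by blast
qed



lemma mc_add: "x \<in> monoid_closure A \<Longrightarrow> y \<in> monoid_closure A \<Longrightarrow> x + y \<in> monoid_closure A"
proof (induction x rule: monoid_closure.induct)
  case zero then show ?case by simp
next
  case (add a x) then show ?case by (simp add: add.assoc monoid_closure.add)
qed

lemma mc_sum: "finite J \<Longrightarrow> (\<forall>j\<in>J. x j \<in> A) \<Longrightarrow> (\<Sum>j\<in>J. x j) \<in> monoid_closure A"
proof (induction J rule: finite_induct)
  case empty then show ?case by (simp add: monoid_closure.zero)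
next
  case (insert j J) then show ?case by (simp add: monoid_closure.add)
qed

lemma mc_rep:
  assumes "y \<in> monoid_closure A"
  shows "\<exists>(J::nat set) x. finite J \<and> (\<forall>j\<in>J. x j \<in> A) \<and> (\<Sum>j\<in>J. x j) = y"
  using assms
proof (induction y rule: monoid_closure.induct)
  case zero
  then show ?case by (intro exI[of _ "{}"]) auto
next
  case (add a y)
  then obtain J :: "nat set" and x where J: "finite J" "\<forall>j\<in>J. x j \<in> A" "(\<Sum>j\<in>J. x j) = y" by blast
  define x' where "x' = (\<lambda>j. if j = 0 then a else x (j - 1))"
  have fin: "finite (Suc ` J)" using J(1) by simp
  have n0: "0 \<notin> Suc ` J" by auto
  have "(\<Sum>j\<in>insert 0 (Suc ` J). x' j) = x' 0 + (\<Sum>j\<in>Suc ` J. x' j)"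
    using sum.insert[OF fin n0] .
  also have "(\<Sum>j\<in>Suc ` J. x' j) = (\<Sum>j\<in>J. x' (Suc j))"
    by (rule sum.reindex_cong[of Suc]) auto
  also have "\<dots> = (\<Sum>j\<in>J. x j)" by (simp add: x'_def)
  finally have s: "(\<Sum>j\<in>insert 0 (Suc ` J). x' j) = a + y" using J(3) by (simp add: x'_def)
  have m: "\<forall>j\<in>insert 0 (Suc ` J). x' j \<in> A" using J(2) add.hyps(1) by (auto simp: x'_def)
  show ?case using s m fin by blast
qed

lemma box_card:
  fixes m :: int assumes "m \<ge> 0"
  shows "card {v :: int^'d. \<forall>i. \<bar>v $ i\<bar> \<le> m} = nat (2*m+1) ^ CARD('d)"
proof -
  have "vec_nth ` {v :: int^'d. \<forall>i. \<bar>v $ i\<bar> \<le> m} = PiE UNIV (\<lambda>_. {-m..m})"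
  proof
    show "vec_nth ` {v :: int^'d. \<forall>i. \<bar>v $ i\<bar> \<le> m} \<subseteq> PiE UNIV (\<lambda>_. {-m..m})"
      by (auto simp: abs_le_iff) (metis neg_le_iff_le minus_minus)
    show "PiE UNIV (\<lambda>_. {-m..m}) \<subseteq> vec_nth ` {v :: int^'d. \<forall>i. \<bar>v $ i\<bar> \<le> m}"
    proof
      fix g :: "'d \<Rightarrow> int" assume g: "g \<in> PiE UNIV (\<lambda>_. {-m..m})"
      have "g = vec_nth (vec_lambda g)" by (simp add: fun_eq_iff)
      moreover have "vec_lambda g \<in> {v :: int^'d. \<forall>i. \<bar>v $ i\<bar> \<le> m}"
      proof -
        have "g i \<in> {-m..m}" for i using g by (auto simp: PiE_iff)
        then show ?thesis by (simp add: abs_le_iff) (metis minus_le_iff)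
      qed
      ultimately show "g \<in> vec_nth ` {v :: int^'d. \<forall>i. \<bar>v $ i\<bar> \<le> m}" by blast
    qed
  qed
  moreover have "inj_on vec_nth {v :: int^'d. \<forall>i. \<bar>v $ i\<bar> \<le> m}" by (auto intro: inj_onI simp: vec_nth_inject)
  ultimately have "card {v :: int^'d. \<forall>i. \<bar>v $ i\<bar> \<le> m} = card (PiE (UNIV::'d set) (\<lambda>_. {-m..m}))"
    by (metis card_image)
  also have "\<dots> = nat (2*m+1) ^ CARD('d)" by (simp add: card_PiE)
  finally show ?thesis .
qed

lemma box_finite:
  fixes m :: int
  shows "finite {v :: int^'d. \<forall>i. \<bar>v $ i\<bar> \<le> m}"
proof -
  have "{v :: int^'d. \<forall>i. \<bar>v $ i\<bar> \<le> m} \<subseteq> vec_lambda ` PiE UNIV (\<lambda>_. {-m..m})"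
  proof
    fix v :: "int^'d" assume "v \<in> {v :: int^'d. \<forall>i. \<bar>v $ i\<bar> \<le> m}"
    then have "vec_nth v \<in> PiE UNIV (\<lambda>_. {-m..m})" by (auto simp: abs_le_iff) (metis neg_le_iff_le minus_minus)
    then show "v \<in> vec_lambda ` PiE UNIV (\<lambda>_. {-m..m})" by (metis image_eqI vec_nth_inverse)
  qed
  moreover have "finite (PiE (UNIV::'d set) (\<lambda>_. {-m..m}))" by (intro finite_PiE) auto
  ultimately show ?thesis using finite_subset by blast
qed



definition conf :: "int^'d \<Rightarrow> int^'d \<Rightarrow> bool" where
  "conf z y \<longleftrightarrow> (\<forall>i. (0 \<le> z$i \<and> z$i \<le> y$i) \<or> (y$i \<le> z$i \<and> z$i \<le> 0))"

definition decomp :: "(int^'d) set \<Rightarrow> int^'d \<Rightarrow> bool" where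
  "decomp A y \<longleftrightarrow> (\<exists>z w. z \<in> monoid_closure A \<and> w \<in> monoid_closure A \<and> z \<noteq> 0 \<and> w \<noteq> 0
      \<and> z + w = y \<and> conf z y \<and> conf w y)"

definition svec :: "int^'d \<Rightarrow> 'd \<times> nat \<Rightarrow> int^'d" where
  "svec y p = (\<chi> k. if k = fst p then - sgn (y $ fst p) else 0)"

lemma svec_sum:
  assumes "finite D"
  shows "(\<Sum>p\<in>D. svec y p) $ k = - sgn (y $ k) * int (card {p\<in>D. fst p = k})"
proof -
  have "(\<Sum>p\<in>D. svec y p) $ k = (\<Sum>p\<in>D. if fst p = k then - sgn (y $ k) else 0)"
    by (auto simp: svec_def intro!: sum.cong)
  also have "\<dots> = (\<Sum>p\<in>{p\<in>D. fst p = k}. - sgn (y $ k))"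
    by (subst sum.inter_filter[OF assms]) simp
  also have "\<dots> = - sgn (y $ k) * int (card {p\<in>D. fst p = k})" by simp
  finally show ?thesis .
qed

definition Sl :: "int^'d \<Rightarrow> ('d \<times> nat) set" where
  "Sl y = Sigma UNIV (\<lambda>i. {..<nat \<bar>y $ i\<bar>})"

lemma Sl_finite: "finite (Sl y)"
  unfolding Sl_def by (intro finite_SigmaI) auto

lemma Sl_card: "card {p\<in>Sl y. fst p = k} = nat \<bar>y $ k\<bar>"
proof -
  have "{p\<in>Sl y. fst p = k} = {k} \<times> {..<nat \<bar>y $ k\<bar>}" by (auto simp: Sl_def)
  then show ?thesis by (simp add: card_cartesian_product)
qed

lemma Sl_sum: "(\<Sum>p\<in>Sl y. svec y p) = - y"
proof -
  have "(\<Sum>p\<in>Sl y. svec y p) $ k = - y $ k" for k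
    using svec_sum[OF Sl_finite, where y=y and k=k] Sl_card[where y=y and k=k] by (simp add: sgn_mult_abs)
  then show ?thesis by (simp add: vec_eq_iff)
qed



lemma zD_lemma:
  fixes A :: "(int^'d) set" and x :: "nat \<Rightarrow> int^'d" and J :: "nat set"
  assumes J: "finite J" "(\<Sum>j\<in>J. x j) = y"
    and minJ: "\<forall>J'. J' \<subseteq> J \<longrightarrow> (\<Sum>j\<in>J'. x j) = y \<longrightarrow> card J \<le> card J'"
    and D: "D \<subseteq> J <+> Sl y" "D \<noteq> {}" "(\<Sum>q\<in>D. case_sum x (svec y) q) = 0"
  shows "(\<Sum>j\<in>{j\<in>J. Inl j \<in> D}. x j) \<noteq> 0 \<and> conf (\<Sum>j\<in>{j\<in>J. Inl j \<in> D}. x j) y"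
proof -
  define D1 where "D1 = {j\<in>J. Inl j \<in> D}"
  define D2 where "D2 = {p\<in>Sl y. Inr p \<in> D}"
  define z where "z = (\<Sum>j\<in>D1. x j)"
  have fin1: "finite D1" using J(1) by (simp add: D1_def)
  have fin2: "finite D2" using Sl_finite[of y] by (simp add: D2_def)
  have DD: "D = D1 <+> D2"
  proof
    show "D \<subseteq> D1 <+> D2"
    proof
      fix q assume q: "q \<in> D"
      then have "q \<in> J <+> Sl y" using D(1) by blast
      then show "q \<in> D1 <+> D2" using q by (auto simp: D1_def D2_def)
    qed
    show "D1 <+> D2 \<subseteq> D" by (auto simp: D1_def D2_def)
  qed
  have "(\<Sum>q\<in>D. case_sum x (svec y) q) = z + (\<Sum>p\<in>D2. svec y p)"
    unfolding DD z_def using sum.Plus[OF fin1 fin2, of "case_sum x (svec y)"] by (simp add: comp_def)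
  then have zeq: "z = - (\<Sum>p\<in>D2. svec y p)" using D(3) by (simp add: eq_neg_iff_add_eq_0)
  have zk: "z $ k = sgn (y $ k) * int (card {p\<in>D2. fst p = k})" for k
    using zeq svec_sum[OF fin2, where y=y and k=k] by simp
  have ck: "card {p\<in>D2. fst p = k} \<le> nat \<bar>y $ k\<bar>" for k
  proof -
    have "card {p\<in>D2. fst p = k} \<le> card {p\<in>Sl y. fst p = k}"
      using Sl_finite[of y] by (intro card_mono) (auto simp: D2_def)
    then show ?thesis using Sl_card[of y k] by simp
  qed
  have cz: "conf z y"
    unfolding conf_def
  proof
    fix k
    have c: "int (card {p\<in>D2. fst p = k}) \<le> \<bar>y $ k\<bar>" using ck[of k] by linarith
    show "(0 \<le> z$k \<and> z$k \<le> y$k) \<or> (y$k \<le> z$k \<and> z$k \<le> 0)"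
      using c zk[of k] by (cases "y $ k > 0"; cases "y $ k < 0") auto
  qed
  have nz: "z \<noteq> 0"
  proof
    assume z0: "z = 0"
    have "D2 = {}"
    proof (rule ccontr)
      assume "D2 \<noteq> {}"
      then obtain p where p: "p \<in> D2" by blast
      define k where "k = fst p"
      have "snd p < nat \<bar>y $ k\<bar>" using p by (auto simp: D2_def Sl_def k_def mem_Sigma_iff)
      then have yk: "y $ k \<noteq> 0" by auto
      have "p \<in> {p\<in>D2. fst p = k}" using p k_def by simp
      then have "card {p\<in>D2. fst p = k} \<noteq> 0" using fin2 by (metis (no_types, lifting) card_0_eq empty_iff finite_subset mem_Collect_eq subsetI)
      then have "z $ k \<noteq> 0" using zk[of k] yk by (simp add: sgn_0_0)
      then show False using z0 by simp
    qed
    then have "D1 \<noteq> {}" using D(2) DD by auto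
    have sub: "J - D1 \<subseteq> J" by blast
    have "(\<Sum>j\<in>J - D1. x j) = y - z"
      using J fin1 by (simp add: sum_diff D1_def z_def)
    then have "(\<Sum>j\<in>J - D1. x j) = y" using z0 by simp
    then have "card J \<le> card (J - D1)" using minJ sub by blast
    moreover have "card (J - D1) < card J"
      using \<open>D1 \<noteq> {}\<close> J(1) by (intro psubset_card_mono) (auto simp: D1_def)
    ultimately show False by simp
  qed
  show ?thesis using nz cz by (simp add: z_def D1_def)
qed



lemma atom_bound:
  fixes A :: "(int^'d) set" and K :: int
  assumes K: "\<forall>v\<in>A. \<forall>i. \<bar>v$i\<bar> \<le> K" "K \<ge> 1" and y: "y \<in> monoid_closure A" and nd: "\<not> decomp A y"
  shows "\<bar>y$i\<bar> \<le> (2 * int CARD('d) * K + 1) ^ CARD('d)"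
proof -
  define P where "P m \<longleftrightarrow> (\<exists>(J::nat set) x. finite J \<and> (\<forall>j\<in>J. x j \<in> A) \<and> (\<Sum>j\<in>J. x j) = y \<and> card J = m)" for m
  have "\<exists>m. P m" using mc_rep[OF y] unfolding P_def by blast
  define m0 where "m0 = (LEAST m. P m)"
  have "P m0" unfolding m0_def using \<open>\<exists>m. P m\<close> by (rule LeastI_ex)
  then obtain J :: "nat set" and x where J: "finite J" "\<forall>j\<in>J. x j \<in> A" "(\<Sum>j\<in>J. x j) = y" "card J = m0"
    unfolding P_def by blast
  have minJ: "\<forall>J'. J' \<subseteq> J \<longrightarrow> (\<Sum>j\<in>J'. x j) = y \<longrightarrow> card J \<le> card J'"
  proof (intro allI impI)
    fix J' assume "J' \<subseteq> J" "(\<Sum>j\<in>J'. x j) = y"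
    moreover have "finite J'" using \<open>J' \<subseteq> J\<close> J(1) finite_subset by blast
    moreover have "\<forall>j\<in>J'. x j \<in> A" using \<open>J' \<subseteq> J\<close> J(2) by blast
    ultimately have "P (card J')" unfolding P_def by (intro exI[of _ J'] exI[of _ x]) simp
    then show "card J \<le> card J'" using J(4) unfolding m0_def by (simp add: Least_le)
  qed
  define Tot where "Tot = J <+> Sl y"
  define w where "w = case_sum x (svec y)"
  have finT: "finite Tot" using J(1) Sl_finite[of y] by (simp add: Tot_def)
  have sumT: "(\<Sum>q\<in>Tot. w q) = 0"
    unfolding Tot_def w_def using sum.Plus[OF J(1) Sl_finite[of y], of "case_sum x (svec y)"] J(3) Sl_sum[of y]
    by (simp add: comp_def)
  define u where "u q = (\<chi> i. real_of_int (w q $ i))" for q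
  have ub: "\<forall>q\<in>Tot. \<forall>i. \<bar>u q $ i\<bar> \<le> real_of_int K"
  proof (intro ballI allI)
    fix q i assume q: "q \<in> Tot"
    have "\<bar>w q $ i\<bar> \<le> K"
    proof (cases q)
      case (Inl j)
      then have "j \<in> J" using q by (auto simp: Tot_def)
      then show ?thesis using K(1) J(2) Inl by (simp add: w_def)
    next
      case (Inr p)
      have "\<bar>svec y p $ i\<bar> \<le> 1" by (simp add: svec_def abs_sgn_eq)
      then show ?thesis using K(2) Inr by (simp add: w_def)
    qed
    then show "\<bar>u q $ i\<bar> \<le> real_of_int K" by (simp add: u_def)
  qed
  have usum: "(\<Sum>q\<in>S. u q) $ i = real_of_int ((\<Sum>q\<in>S. w q) $ i)" for S i
    by (simp add: u_def)
  have sumu: "(\<Sum>q\<in>Tot. u q) = 0"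
  proof -
    have "(\<Sum>q\<in>Tot. u q) $ i = 0" for i
    proof -
      have "(\<Sum>q\<in>Tot. u q) $ i = real_of_int ((\<Sum>q\<in>Tot. w q) $ i)" by (rule usum)
      then show ?thesis using sumT by simp
    qed
    then show ?thesis by (simp add: vec_eq_iff del: sum_component)
  qed
  obtain f where f1: "\<forall>k\<le>card Tot. f k \<subseteq> Tot \<and> card (f k) = k \<and> bnd u (real_of_int K) (f k)"
    and f2: "\<forall>k<card Tot. f k \<subseteq> f (Suc k)"
    using steinitz_chain[OF ub _ finT sumu] K(2) by auto
  define n where "n = card Tot"
  define s where "s k = (\<Sum>q\<in>f k. w q)" for k
  define B where "B = {v :: int^'d. \<forall>i. \<bar>v $ i\<bar> \<le> int CARD('d) * K}"
  have sB: "s k \<in> B" if "k \<le> n" for k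
  proof -
    have "bnd u (real_of_int K) (f k)" using f1 that n_def by blast
    then have "\<bar>real_of_int ((s k) $ i)\<bar> \<le> real CARD('d) * real_of_int K" for i
      unfolding bnd_def s_def usum by blast
    then have "\<bar>(s k) $ i\<bar> \<le> int CARD('d) * K" for i
      by (metis of_int_abs of_int_le_iff of_int_mult of_int_of_nat_eq)
    then show ?thesis by (simp add: B_def)
  qed
  have mono: "f j \<subseteq> f k" if "j \<le> k" "k \<le> n" for j k
    using that
  proof (induction k)
    case 0 then show ?case by simp
  next
    case (Suc k)
    show ?case
    proof (cases "j = Suc k")
      case True then show ?thesis by simp
    next
      case False
      then have "j \<le> k" using Suc.prems by simp
      then have "f j \<subseteq> f k" using Suc by simp
      also have "f k \<subseteq> f (Suc k)" using f2 Suc.prems n_def by simp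
      finally show ?thesis .
    qed
  qed
  have Dlem: "\<And>D. D \<subseteq> Tot \<Longrightarrow> D \<noteq> {} \<Longrightarrow> (\<Sum>q\<in>D. w q) = 0 \<Longrightarrow>
      (\<Sum>j\<in>{j\<in>J. Inl j \<in> D}. x j) \<noteq> 0 \<and> conf (\<Sum>j\<in>{j\<in>J. Inl j \<in> D}. x j) y"
  proof -
    fix D assume a: "D \<subseteq> Tot" "D \<noteq> {}" "(\<Sum>q\<in>D. w q) = 0"
    show "(\<Sum>j\<in>{j\<in>J. Inl j \<in> D}. x j) \<noteq> 0 \<and> conf (\<Sum>j\<in>{j\<in>J. Inl j \<in> D}. x j) y"
      by (rule zD_lemma[OF J(1) J(3) minJ]) (use a in \<open>simp_all add: Tot_def w_def\<close>)
  qed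
  have nB: "n \<le> card B"
  proof (rule ccontr)
    assume "\<not> n \<le> card B"
    have finB: "finite B" unfolding B_def by (rule box_finite)
    have "\<not> inj_on s {..<n}"
    proof
      assume "inj_on s {..<n}"
      moreover have "s ` {..<n} \<subseteq> B" using sB by auto
      ultimately have "card {..<n} \<le> card B" using finB by (metis card_inj_on_le)
      then show False using \<open>\<not> n \<le> card B\<close> by simp
    qed
    then obtain a b where ab: "a < n" "b < n" "a \<noteq> b" "s a = s b"
      unfolding inj_on_def by auto
    obtain j k where jk: "j < k" "k < n" "s j = s k"
      using ab by (metis linorder_neqE_nat)
    define D where "D = f k - f j"
    have fjk: "f j \<subseteq> f k" using mono jk by simp
    have fkT: "f k \<subseteq> Tot" "card (f k) = k" using f1 jk n_def by auto
    have fjc: "card (f j) = j" using f1 jk n_def by auto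
    have finfk: "finite (f k)" using fkT finT finite_subset by blast
    have DT: "D \<subseteq> Tot" using fkT by (auto simp: D_def)
    have "card D = k - j" using fjk finfk fkT fjc by (simp add: D_def card_Diff_subset finite_subset)
    then have Dne: "D \<noteq> {}" using jk by auto
    have Ds: "(\<Sum>q\<in>D. w q) = 0"
      using jk fjk finfk by (simp add: D_def sum_diff finite_subset s_def)
    have "f k \<noteq> Tot" using fkT jk n_def by auto
    then obtain q where "q \<in> Tot" "q \<notin> f k" using fkT by blast
    then have D'ne: "Tot - D \<noteq> {}" by (auto simp: D_def)
    have D's: "(\<Sum>q\<in>Tot - D. w q) = 0"
      using DT finT Ds sumT by (simp add: sum_diff)
    have r1: "(\<Sum>j\<in>{j\<in>J. Inl j \<in> D}. x j) \<noteq> 0 \<and> conf (\<Sum>j\<in>{j\<in>J. Inl j \<in> D}. x j) y"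
      using Dlem[OF DT Dne Ds] .
    have r2: "(\<Sum>j\<in>{j\<in>J. Inl j \<in> Tot - D}. x j) \<noteq> 0 \<and> conf (\<Sum>j\<in>{j\<in>J. Inl j \<in> Tot - D}. x j) y"
      using Dlem[OF _ D'ne D's] by blast
    have e: "{j\<in>J. Inl j \<in> Tot - D} = J - {j\<in>J. Inl j \<in> D}" by (auto simp: Tot_def)
    have "(\<Sum>j\<in>{j\<in>J. Inl j \<in> D}. x j) + (\<Sum>j\<in>J - {j\<in>J. Inl j \<in> D}. x j) = y"
      using J(1) J(3) by (simp add: sum_diff)
    moreover have "(\<Sum>j\<in>{j\<in>J. Inl j \<in> D}. x j) \<in> monoid_closure A"
      using J by (intro mc_sum) auto
    moreover have "(\<Sum>j\<in>J - {j\<in>J. Inl j \<in> D}. x j) \<in> monoid_closure A"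
      using J by (intro mc_sum) auto
    ultimately have "decomp A y" using r1 r2 unfolding e decomp_def by blast
    then show False using nd by simp
  qed
  have "card B = nat (2 * (int CARD('d) * K) + 1) ^ CARD('d)"
    unfolding B_def using K(2) by (intro box_card) simp
  moreover have "nat \<bar>y $ i\<bar> \<le> n"
  proof -
    have "nat \<bar>y $ i\<bar> = card {p\<in>Sl y. fst p = i}" by (simp add: Sl_card)
    also have "\<dots> \<le> card (Sl y)" using Sl_finite[of y] by (intro card_mono) auto
    also have "\<dots> \<le> n" using J(1) Sl_finite[of y] by (simp add: n_def Tot_def card_Plus)
    finally show ?thesis .
  qed
  ultimately have "nat \<bar>y $ i\<bar> \<le> nat (2 * (int CARD('d) * K) + 1) ^ CARD('d)" using nB by simp
  then have "int (nat \<bar>y $ i\<bar>) \<le> int (nat (2 * (int CARD('d) * K) + 1) ^ CARD('d))" by linarith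
  then show ?thesis using K(2) by (simp add: algebra_simps)
qed



lemma l1_lt:
  fixes z w y :: "int^'d"
  assumes "conf z y" "conf w y" "z + w = y" "w \<noteq> 0"
  shows "nat (\<Sum>i\<in>UNIV. \<bar>z$i\<bar>) < nat (\<Sum>i\<in>UNIV. \<bar>y$i\<bar>)"
proof -
  have eq: "\<bar>y$i\<bar> = \<bar>z$i\<bar> + \<bar>w$i\<bar>" for i
  proof -
    have "y$i = z$i + w$i" using assms(3) by (metis vector_add_component)
    then show ?thesis using assms(1,2) unfolding conf_def by (smt (verit))
  qed
  obtain k where k: "w$k \<noteq> 0" using assms(4) by (metis vec_eq_iff zero_index)
  have "(\<Sum>i\<in>UNIV. \<bar>y$i\<bar>) = (\<Sum>i\<in>UNIV. \<bar>z$i\<bar>) + (\<Sum>i\<in>UNIV. \<bar>w$i\<bar>)"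
    by (simp add: eq sum.distrib)
  moreover have "(\<Sum>i\<in>UNIV. \<bar>w$i\<bar>) > 0"
  proof -
    have "(\<Sum>i\<in>UNIV. \<bar>w$i\<bar>) \<ge> \<bar>w$k\<bar>"
      by (rule member_le_sum) auto
    then show ?thesis using k by simp
  qed
  moreover have "(\<Sum>i\<in>UNIV. \<bar>z$i\<bar>) \<ge> 0" by (simp add: sum_nonneg)
  ultimately have "(\<Sum>i\<in>UNIV. \<bar>z$i\<bar>) < (\<Sum>i\<in>UNIV. \<bar>y$i\<bar>)" "0 < (\<Sum>i\<in>UNIV. \<bar>y$i\<bar>)" by linarith+
  then show ?thesis by (simp add: zless_nat_conj)
qed

lemma cover:
  fixes A :: "(int^'d) set" and C :: int
  assumes atom: "\<And>v i. v \<in> monoid_closure A \<Longrightarrow> \<not> decomp A v \<Longrightarrow> \<bar>v$i\<bar> \<le> C" and C0: "C \<ge> 0"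
  shows "y \<in> monoid_closure A \<Longrightarrow> I \<subseteq> {i. y$i \<noteq> 0} \<Longrightarrow>
    \<exists>z\<in>monoid_closure A. conf z y \<and> I \<subseteq> {i. z$i \<noteq> 0} \<and> (\<forall>i. \<bar>z$i\<bar> \<le> int (card I) * C)"
proof (induction "nat (\<Sum>i\<in>UNIV. \<bar>y$i\<bar>)" arbitrary: y I rule: less_induct)
  case less
  show ?case
  proof (cases "decomp A y")
    case True
    then obtain z w where zw: "z \<in> monoid_closure A" "w \<in> monoid_closure A" "z \<noteq> 0" "w \<noteq> 0"
      "z + w = y" "conf z y" "conf w y" unfolding decomp_def by blast
    have yi: "y$i = z$i + w$i" for i using zw(5) by (metis vector_add_component)
    define I1 where "I1 = I \<inter> {i. z$i \<noteq> 0}"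
    define I2 where "I2 = I - I1"
    have I1s: "I1 \<subseteq> {i. z$i \<noteq> 0}" by (auto simp: I1_def)
    have I2s: "I2 \<subseteq> {i. w$i \<noteq> 0}" using less.prems(2) yi by (auto simp: I1_def I2_def)
    have ltz: "nat (\<Sum>i\<in>UNIV. \<bar>z$i\<bar>) < nat (\<Sum>i\<in>UNIV. \<bar>y$i\<bar>)"
      using l1_lt[OF zw(6) zw(7) zw(5) zw(4)] .
    have ltw: "nat (\<Sum>i\<in>UNIV. \<bar>w$i\<bar>) < nat (\<Sum>i\<in>UNIV. \<bar>y$i\<bar>)"
      using l1_lt[OF zw(7) zw(6) _ zw(3)] zw(5) by (simp add: add.commute)
    obtain z' where z': "z' \<in> monoid_closure A" "conf z' z" "I1 \<subseteq> {i. z'$i \<noteq> 0}" "\<forall>i. \<bar>z'$i\<bar> \<le> int (card I1) * C"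
      using less.hyps[OF ltz zw(1) I1s] by blast
    obtain w' where w': "w' \<in> monoid_closure A" "conf w' w" "I2 \<subseteq> {i. w'$i \<noteq> 0}" "\<forall>i. \<bar>w'$i\<bar> \<le> int (card I2) * C"
      using less.hyps[OF ltw zw(2) I2s] by blast
    have c: "conf (z' + w') y" unfolding conf_def
    proof
      fix i
      show "(0 \<le> (z' + w')$i \<and> (z' + w')$i \<le> y$i) \<or> (y$i \<le> (z' + w')$i \<and> (z' + w')$i \<le> 0)"
      proof -
        have ci: "(0 \<le> z'$i \<and> z'$i \<le> z$i) \<or> (z$i \<le> z'$i \<and> z'$i \<le> 0)"
           "(0 \<le> w'$i \<and> w'$i \<le> w$i) \<or> (w$i \<le> w'$i \<and> w'$i \<le> 0)"
           "(0 \<le> z$i \<and> z$i \<le> y$i) \<or> (y$i \<le> z$i \<and> z$i \<le> 0)"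
           "(0 \<le> w$i \<and> w$i \<le> y$i) \<or> (y$i \<le> w$i \<and> w$i \<le> 0)"
          using z'(2) w'(2) zw(6) zw(7) unfolding conf_def by blast+
        then show ?thesis using yi[of i] unfolding vector_add_component by (elim disjE; linarith)
      qed
    qed
    have supp: "I \<subseteq> {i. (z' + w')$i \<noteq> 0}"
    proof
      fix i assume i: "i \<in> I"
      have ci: "(0 \<le> z'$i \<and> z'$i \<le> z$i) \<or> (z$i \<le> z'$i \<and> z'$i \<le> 0)"
           "(0 \<le> w'$i \<and> w'$i \<le> w$i) \<or> (w$i \<le> w'$i \<and> w'$i \<le> 0)"
           "(0 \<le> z$i \<and> z$i \<le> y$i) \<or> (y$i \<le> z$i \<and> z$i \<le> 0)"
           "(0 \<le> w$i \<and> w$i \<le> y$i) \<or> (y$i \<le> w$i \<and> w$i \<le> 0)"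
        using z'(2) w'(2) zw(6) zw(7) unfolding conf_def by blast+
      have "z'$i \<noteq> 0 \<or> w'$i \<noteq> 0" using i z'(3) w'(3) by (auto simp: I1_def I2_def)
      then show "i \<in> {i. (z' + w')$i \<noteq> 0}" using ci yi[of i] by (simp only: mem_Collect_eq vector_add_component) linarith
    qed
    have fI: "finite I" by simp
    have cI: "card I = card I1 + card I2"
    proof -
      have "I = I1 \<union> I2" "I1 \<inter> I2 = {}" by (auto simp: I1_def I2_def)
      then show ?thesis using card_Un_disjoint[of I1 I2] by simp
    qed
    have b: "\<forall>i. \<bar>(z' + w')$i\<bar> \<le> int (card I) * C"
    proof
      fix i
      have "\<bar>(z' + w')$i\<bar> \<le> \<bar>z'$i\<bar> + \<bar>w'$i\<bar>" by (simp add: abs_triangle_ineq)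
      also have "\<dots> \<le> int (card I1) * C + int (card I2) * C" using z'(4) w'(4) by (simp add: add_mono)
      also have "\<dots> = int (card I) * C" using cI by (simp add: algebra_simps)
      finally show "\<bar>(z' + w')$i\<bar> \<le> int (card I) * C" .
    qed
    show ?thesis using mc_add[OF z'(1) w'(1)] c supp b by blast
  next
    case False
    show ?thesis
    proof (cases "I = {}")
      case True
      have "conf 0 y" unfolding conf_def by (auto intro: le_cases)
      then show ?thesis using True monoid_closure.zero by (intro bexI[of _ 0]) auto
    next
      case False
      have "card I \<ge> 1" using False by (simp add: Suc_le_eq card_gt_0_iff)
      then have "\<forall>i. \<bar>y$i\<bar> \<le> int (card I) * C"
      proof -
        have "C \<le> int (card I) * C" using \<open>card I \<ge> 1\<close> C0 by (simp add: mult_le_cancel_right1)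
        then show ?thesis using atom[OF less.prems(1) \<open>\<not> decomp A y\<close>] order_trans by blast
      qed
      moreover have "conf y y" unfolding conf_def by (auto intro: le_cases)
      ultimately show ?thesis using less.prems by blast
    qed
  qed
qed



lemma mn_set: "{\<bar>x $ i\<bar> | i. True} = range (\<lambda>i. \<bar>x $ i\<bar>)" by auto

lemma maxnorm_ge: "\<bar>x$i\<bar> \<le> maxnorm x"
  unfolding maxnorm_def mn_set by (rule Max_ge) auto

lemma maxnorm_le: "(\<And>i. \<bar>x$i\<bar> \<le> b) \<Longrightarrow> maxnorm x \<le> b"
  unfolding maxnorm_def mn_set by (rule Max.boundedI) auto

lemma setmax_A: "finite A \<Longrightarrow> v \<in> A \<Longrightarrow> \<bar>v$i\<bar> \<le> set_maxnorm A"
  unfolding set_maxnorm_def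
  by (auto intro!: order_trans[OF maxnorm_ge] Max_ge)

lemma setmax_nonneg: "finite A \<Longrightarrow> 0 \<le> set_maxnorm A"
proof (cases "A = {}")
  case False
  then obtain v where "v \<in> A" by blast
  moreover assume "finite A"
  ultimately show ?thesis using setmax_A[of A v] by (meson abs_ge_zero order_trans)
qed (simp add: set_maxnorm_def)

lemma mc_zero: "y \<in> monoid_closure A \<Longrightarrow> \<forall>v\<in>A. v = 0 \<Longrightarrow> y = 0"
proof (induction y rule: monoid_closure.induct)
  case zero then show ?case by simp
next
  case (add a x) then show ?case by simp
qed

lemma bern: "(a::int) \<ge> 0 \<Longrightarrow> 1 + 2*a*int n \<le> (1+2*a)^n"
proof (induction n)
  case 0 then show ?case by simp
next
  case (Suc n)
  have "1 + 2*a*int (Suc n) = (1 + 2*a*int n) + 2*a" by (simp add: algebra_simps)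
  also have "\<dots> \<le> (1 + 2*a*int n) * (1 + 2*a)"
    using Suc.prems by (simp add: algebra_simps mult_nonneg_nonneg)
  also have "\<dots> \<le> (1+2*a)^n * (1 + 2*a)" using Suc by (intro mult_right_mono) auto
  finally show ?case by (simp add: algebra_simps)
qed

lemma elem_bound:
  fixes A :: "(int^'d) set"
  assumes fin: "finite A" and y: "y \<in> min_sign (monoid_closure A)"
  shows "maxnorm y \<le> int CARD('d) * (2 + (1 + 2 * set_maxnorm A) ^ CARD('d) * set_maxnorm A) ^ CARD('d)"
proof -
  define a where "a = set_maxnorm A"
  define d where "d = CARD('d)"
  have a0: "a \<ge> 0" using setmax_nonneg[OF fin] by (simp add: a_def)
  have Ab: "\<forall>v\<in>A. \<forall>i. \<bar>v$i\<bar> \<le> a" using setmax_A[OF fin] by (simp add: a_def)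
  have ymc: "y \<in> monoid_closure A" and ymin: "\<forall>z\<in>monoid_closure A. sign_le z y \<longrightarrow> z = y"
    using y by (auto simp: min_sign_def)
  have bnn: "0 \<le> int d * (2 + (1 + 2 * a) ^ d * a) ^ d" using a0 by simp
  show ?thesis
  proof (cases "a \<ge> 1")
    case False
    then have "a = 0" using a0 by simp
    then have "\<forall>v\<in>A. v = 0" using Ab by (simp add: vec_eq_iff)
    then have "y = 0" using mc_zero ymc by blast
    then have "maxnorm y \<le> 0" by (intro maxnorm_le) simp
    then show ?thesis using bnn by (simp add: a_def d_def)
  next
    case True
    define C where "C = (2 * int d * a + 1) ^ d"
    have C0: "C \<ge> 0" using a0 by (simp add: C_def)
    have atom: "\<And>v i. v \<in> monoid_closure A \<Longrightarrow> \<not> decomp A v \<Longrightarrow> \<bar>v$i\<bar> \<le> C"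
      unfolding C_def d_def using atom_bound[OF Ab True] by blast
    obtain z where z: "z \<in> monoid_closure A" "conf z y" "{i. y$i \<noteq> 0} \<subseteq> {i. z$i \<noteq> 0}"
      "\<forall>i. \<bar>z$i\<bar> \<le> int (card {i. y$i \<noteq> 0}) * C"
      using cover[OF atom C0 ymc, of "{i. y$i \<noteq> 0}"] by blast
    have "sign_le z y" unfolding sign_le_def
    proof
      fix i
      have "(0 \<le> z$i \<and> z$i \<le> y$i) \<or> (y$i \<le> z$i \<and> z$i \<le> 0)" using z(2) by (simp add: conf_def)
      moreover have "y$i \<noteq> 0 \<longrightarrow> z$i \<noteq> 0" using z(3) by blast
      ultimately show "sgn (z$i) = sgn (y$i) \<and> \<bar>z$i\<bar> \<le> \<bar>y$i\<bar>"
        by (auto simp: sgn_if)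
    qed
    then have "z = y" using ymin z(1) by blast
    have cd: "int (card {i. y$i \<noteq> 0}) \<le> int d"
      unfolding d_def by (simp add: card_mono)
    have yb: "\<bar>y$i\<bar> \<le> int d * C" for i
    proof -
      have "\<bar>y$i\<bar> \<le> int (card {i. y$i \<noteq> 0}) * C" using z(4) \<open>z = y\<close> by simp
      also have "\<dots> \<le> int d * C" using cd C0 by (intro mult_right_mono) auto
      finally show ?thesis .
    qed
    have "2 * int d * a + 1 \<le> 2 + (1 + 2 * a) ^ d * a"
    proof -
      have "(1 + 2*a*int d) * a \<le> (1 + 2 * a) ^ d * a" using bern[OF a0, of d] a0 by (intro mult_right_mono) auto
      moreover have "2 * int d * a \<le> (1 + 2*a*int d) * a"
      proof -
        have "2 * int d * a * 1 \<le> 2 * int d * a * a" by (rule mult_left_mono) (use True a0 in auto)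
        then show ?thesis using a0 by (simp add: algebra_simps)
      qed
      ultimately show ?thesis by simp
    qed
    then have "C \<le> (2 + (1 + 2 * a) ^ d * a) ^ d"
      unfolding C_def using a0 by (intro power_mono) auto
    then have "int d * C \<le> int d * (2 + (1 + 2 * a) ^ d * a) ^ d" by (intro mult_left_mono) auto
    then have "maxnorm y \<le> int d * (2 + (1 + 2 * a) ^ d * a) ^ d"
      using yb by (intro maxnorm_le) (meson order_trans)
    then show ?thesis by (simp add: a_def d_def)
  qed
qed

theorem lemma10:
  fixes A :: "(int ^ 'd) set"
  assumes "finite A"
  shows "set_maxnorm (min_sign (monoid_closure A))
    \<le> int CARD('d) * (2 + (1 + 2 * set_maxnorm A) ^ CARD('d) * set_maxnorm A) ^ CARD('d)"
proof -
  define Bd where "Bd = int CARD('d) * (2 + (1 + 2 * set_maxnorm A) ^ CARD('d) * set_maxnorm A) ^ CARD('d)"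
  define M where "M = min_sign (monoid_closure A)"
  have eb: "\<forall>y\<in>M. maxnorm y \<le> Bd" using elem_bound[OF assms] by (simp add: M_def Bd_def)
  have a0: "0 \<le> set_maxnorm A" using setmax_nonneg[OF assms] .
  have B0: "0 \<le> Bd" using a0 by (simp add: Bd_def)
  have "set_maxnorm M \<le> Bd"
  proof (cases "M = {}")
    case True then show ?thesis using B0 by (simp add: set_maxnorm_def)
  next
    case False
    have mn0: "0 \<le> maxnorm y" for y :: "int^'d" by (rule order_trans[OF abs_ge_zero maxnorm_ge])
    have "maxnorm ` M \<subseteq> {0..Bd}" using eb mn0 by auto
    then have "finite (maxnorm ` M)" using finite_subset by blast
    then have "Max (maxnorm ` M) \<le> Bd" using False eb by (intro Max.boundedI) auto
    then show ?thesis using False by (simp add: set_maxnorm_def)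
  qed
  then show ?thesis by (simp add: M_def Bd_def)
qed

end
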